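(* (i) If for some $m\ge0$ every solution of the expanded equation $z_{n+1}=\sum_{j=0}^{k-1}b_{m,j}z_{n-m-j}$ converges to $0$, then every solution of $x_{n+1}=\sum_{j=0}^{k-1}a_jx_{n-j}$ converges to $0$. (ii) If every solution of $x_{n+1}=\sum_{j=0}^{k-1}a_jx_{n-j}$ converges to $0$ and, for some $m\ge 0$, all zeros of $q_m$ lie in the open unit disk $\mathbb{D}=\{z\in\mathbb{C}:|z|<1\}$, then every solution of $z_{n+1}=\sum_{j=0}^{k-1}b_{m,j}z_{n-m-j}$ converges to $0$.
   Context: Let $k\ge 2$, $a_0,\dots,a_{k-1}\in\mathbb{R}$, $a_0\ne0$. Define $b_{0,j}=a_j$ ($0\le j\le k-1$) and for $m\ge0$: $b_{m+1,j}=a_jb_{m,0}+b_{m,j+1}$ ($0\le j\le k-2$), $b_{m+1,k-1}=a_{k-1}b_{m,0}$. The equation $z_{n+1}=\sum_{j=0}^{k-1}b_{m,j}z_{n-m-j}$ (with $m+k$ arbitrary real initial values) is the $m$-times expanded equation. $q_m(x)=x^m+\sum_{i=0}^{m-1}b_{i,0}x^{m-i-1}$, with $q_0\equiv 1$. (Every solution converging to $0$ is equivalent to all zeros of the corresponding characteristic polynomial lying in $\mathbb{D}$.) *)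

theory Defs
  imports Complex_Main
begin

text \<open>Coefficients b_{m,j} of the m-times expanded equation (only 0 <= j <= k-1 is meaningful).\<close>
fun bcoef :: "(nat \<Rightarrow> real) \<Rightarrow> nat \<Rightarrow> nat \<Rightarrow> nat \<Rightarrow> real" where
  "bcoef a k 0 j = a j"
| "bcoef a k (Suc m) j =
     (if j + 1 < k then a j * bcoef a k m 0 + bcoef a k m (j + 1)
      else a (k - 1) * bcoef a k m 0)"

text \<open>x solves x_{n+1} = sum_{j<k} a_j x_{n-j}; indices shifted so the k initial values are x 0..x (k-1).\<close>
definition is_sol :: "(nat \<Rightarrow> real) \<Rightarrow> nat \<Rightarrow> (nat \<Rightarrow> real) \<Rightarrow> bool" where
  "is_sol a k x \<longleftrightarrow> (\<forall>n. x (n + k) = (\<Sum>j<k. a j * x (n + k - 1 - j)))"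

text \<open>z solves z_{n+1} = sum_{j<k} b_{m,j} z_{n-m-j}; m+k initial values z 0..z (m+k-1).\<close>
definition is_exp_sol :: "(nat \<Rightarrow> real) \<Rightarrow> nat \<Rightarrow> nat \<Rightarrow> (nat \<Rightarrow> real) \<Rightarrow> bool" where
  "is_exp_sol a k m z \<longleftrightarrow>
     (\<forall>n. z (n + m + k) = (\<Sum>j<k. bcoef a k m j * z (n + m + k - 1 - m - j)))"

definition qpoly :: "(nat \<Rightarrow> real) \<Rightarrow> nat \<Rightarrow> nat \<Rightarrow> complex \<Rightarrow> complex" where
  "qpoly a k m z = z ^ m + (\<Sum>i<m. complex_of_real (bcoef a k i 0) * z ^ (m - i - 1))"

end

theory Submission
  imports Defs "HOL-Computational_Algebra.Computational_Algebra"
begin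
lemma first_order:
  fixes v :: "nat \<Rightarrow> complex"
  assumes r: "cmod r < 1" and f: "(\<lambda>n. v (Suc n) - r * v n) \<longlonglongrightarrow> 0"
  shows "v \<longlonglongrightarrow> 0"
proof (rule LIMSEQ_I)
  fix e :: real assume e: "e > 0"
  define \<rho> where "\<rho> = cmod r"
  define d where "d = e / 2"
  have d: "d > 0" using e by (simp add: d_def)
  have rho: "0 \<le> \<rho>" "\<rho> < 1" using r by (auto simp: \<rho>_def)
  have "d * (1 - \<rho>) > 0" using d rho by simp
  from LIMSEQ_D[OF f this] obtain N where N: "\<And>n. n \<ge> N \<Longrightarrow> cmod (v (Suc n) - r * v n) < d * (1 - \<rho>)"
    by auto
  define g where "g n = cmod (v n) - d" for n
  have step: "g (Suc n) \<le> \<rho> * g n" if "n \<ge> N" for n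
  proof -
    have "cmod (v (Suc n)) \<le> cmod (r * v n) + cmod (v (Suc n) - r * v n)"
      by (metis add.commute diff_add_cancel norm_triangle_ineq)
    also have "\<dots> \<le> \<rho> * cmod (v n) + d * (1 - \<rho>)"
      using N[OF that] by (simp add: \<rho>_def norm_mult)
    finally show ?thesis by (simp add: g_def algebra_simps)
  qed
  have bound: "g (N + j) \<le> \<rho> ^ j * \<bar>g N\<bar>" for j
  proof (induction j)
    case 0 then show ?case by simp
  next
    case (Suc j)
    have "g (N + Suc j) \<le> \<rho> * g (N + j)" using step[of "N + j"] by simp
    also have "\<dots> \<le> \<rho> * (\<rho> ^ j * \<bar>g N\<bar>)" using Suc rho by (simp add: mult_left_mono)
    finally show ?case by simp
  qed
  have "(\<lambda>j. \<rho> ^ j * \<bar>g N\<bar>) \<longlonglongrightarrow> 0 * \<bar>g N\<bar>"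
    by (intro tendsto_mult tendsto_const LIMSEQ_power_zero) (use rho in auto)
  then have "(\<lambda>j. \<rho> ^ j * \<bar>g N\<bar>) \<longlonglongrightarrow> 0" by simp
  from LIMSEQ_D[OF this d] obtain J where J: "\<And>j. j \<ge> J \<Longrightarrow> norm (\<rho> ^ j * \<bar>g N\<bar>) < d" by auto
  show "\<exists>no. \<forall>n\<ge>no. norm (v n - 0) < e"
  proof (intro exI allI impI)
    fix n assume n: "n \<ge> N + J"
    define j where "j = n - N"
    have j: "n = N + j" "j \<ge> J" using n by (auto simp: j_def)
    have "\<rho> ^ j * \<bar>g N\<bar> \<le> norm (\<rho> ^ j * \<bar>g N\<bar>)" by simp
    then have "g n < d" using bound[of j] J[OF j(2)] j(1) by simp
    then show "norm (v n - 0) < e" by (simp add: g_def d_def)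
  qed
qed

definition opQ :: "complex poly \<Rightarrow> (nat \<Rightarrow> complex) \<Rightarrow> nat \<Rightarrow> complex" where
  "opQ Q u n = (\<Sum>i\<le>degree Q. coeff Q i * u (n + i))"

lemma opQ_big:
  assumes "degree Q \<le> N"
  shows "opQ Q u n = (\<Sum>i\<le>N. coeff Q i * u (n + i))"
proof -
  have "(\<Sum>i\<le>N. coeff Q i * u (n + i)) = (\<Sum>i\<le>degree Q. coeff Q i * u (n + i))"
    by (rule sum.mono_neutral_right) (use assms in \<open>auto simp: coeff_eq_0\<close>)
  then show ?thesis by (simp add: opQ_def)
qed

lemma opQ_lin:
  "opQ ([:-r, 1:] * Q) u n = opQ Q u (Suc n) - r * opQ Q u n"
proof -
  define d where "d = degree Q"
  have deg: "degree ([:-r, 1:] * Q) \<le> Suc d"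
    using degree_mult_le[of "[:-r, 1:]" Q] by (simp add: d_def)
  have "opQ ([:-r, 1:] * Q) u n = (\<Sum>i\<le>Suc d. coeff ([:-r, 1:] * Q) i * u (n + i))"
    by (rule opQ_big[OF deg])
  also have "\<dots> = (\<Sum>i\<le>Suc d. coeff (pCons 0 Q) i * u (n + i)) - r * (\<Sum>i\<le>Suc d. coeff Q i * u (n + i))"
    by (simp add: algebra_simps sum_subtractf sum_distrib_left)
  also have "(\<Sum>i\<le>Suc d. coeff (pCons 0 Q) i * u (n + i)) = (\<Sum>i\<le>d. coeff Q i * u (Suc n + i))"
    by (subst sum.atMost_Suc_shift) simp
  also have "(\<Sum>i\<le>Suc d. coeff Q i * u (n + i)) = (\<Sum>i\<le>d. coeff Q i * u (n + i))"
    by (simp add: d_def coeff_eq_0)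
  finally show ?thesis by (simp add: opQ_def d_def)
qed


lemma opQ_const: "degree Q = 0 \<Longrightarrow> opQ Q u n = coeff Q 0 * u n"
  by (simp add: opQ_def)

lemma stable_poly:
  "\<And>Q u. degree Q = d \<Longrightarrow> Q \<noteq> 0 \<Longrightarrow> (\<forall>w. poly Q w = 0 \<longrightarrow> cmod w < 1)
     \<Longrightarrow> (\<lambda>n. opQ Q u n) \<longlonglongrightarrow> 0 \<Longrightarrow> u \<longlonglongrightarrow> 0"
proof (induction d)
  case 0
  then have c: "coeff Q 0 \<noteq> 0" by (metis leading_coeff_0_iff)
  have "(\<lambda>n. opQ Q u n / coeff Q 0) \<longlonglongrightarrow> 0 / coeff Q 0"
    by (intro tendsto_divide tendsto_const) (use 0 c in auto)
  moreover have "opQ Q u n / coeff Q 0 = u n" for n using c 0(1) by (simp add: opQ_const)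
  ultimately show ?case by simp
next
  case (Suc d)
  have "\<not> constant (poly Q)" using Suc.prems(1) by (simp add: constant_degree)
  then obtain r where r: "poly Q r = 0" using fundamental_theorem_of_algebra by blast
  then obtain Q' where Q: "Q = [:-r, 1:] * Q'" using poly_eq_0_iff_dvd by (metis dvdE)
  have Q'0: "Q' \<noteq> 0" using Q Suc.prems(2) by auto
  have dQ': "degree Q' = d" proof -
    have "degree Q = degree [:-r, 1:] + degree Q'" unfolding Q
      by (rule degree_mult_eq) (use Q'0 in auto)
    then show ?thesis using Suc.prems(1) by simp
  qed
  have roots: "\<forall>w. poly Q' w = 0 \<longrightarrow> cmod w < 1" using Suc.prems(3) Q by auto
  have rr: "cmod r < 1" using Suc.prems(3) r by auto
  have "(\<lambda>n. opQ Q' u (Suc n) - r * opQ Q' u n) \<longlonglongrightarrow> 0"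
    using Suc.prems(4) unfolding Q opQ_lin .
  then have "(\<lambda>n. opQ Q' u n) \<longlonglongrightarrow> 0" by (rule first_order[OF rr])
  then show ?case using Suc.IH[OF dQ' Q'0 roots] by blast
qed


lemma sol_exp:
  assumes sol: "is_sol a k x" and k: "k \<ge> 1"
  shows "x (n + m + k) = (\<Sum>j<k. bcoef a k m j * x (n + k - 1 - j))"
proof (induction m arbitrary: n)
  case 0
  then show ?case using sol by (simp add: is_sol_def)
next
  case (Suc m)
  obtain k' where k': "k = Suc k'" using k by (cases k) auto
  have "x (n + Suc m + k) = x (Suc n + m + k)" by simp
  also have "\<dots> = (\<Sum>j<k. bcoef a k m j * x (Suc n + k - 1 - j))" by (rule Suc.IH)
  also have "\<dots> = (\<Sum>j<Suc k'. bcoef a k m j * x (n + k - j))" by (simp add: k')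
  also have "\<dots> = bcoef a k m 0 * x (n + k) + (\<Sum>j<k'. bcoef a k m (Suc j) * x (n + k - 1 - j))"
    by (subst sum.lessThan_Suc_shift) (simp add: k')
  also have "x (n + k) = (\<Sum>j<k. a j * x (n + k - 1 - j))"
    using sol unfolding is_sol_def by (metis add.commute)
  finally have L: "x (n + Suc m + k) = (\<Sum>j<k. bcoef a k m 0 * a j * x (n + k - 1 - j))
       + (\<Sum>j<k'. bcoef a k m (Suc j) * x (n + k - 1 - j))"
    by (simp add: sum_distrib_left mult.assoc)
  have "(\<Sum>j<k. bcoef a k (Suc m) j * x (n + k - 1 - j))
      = (\<Sum>j<k. bcoef a k m 0 * a j * x (n + k - 1 - j) + (if j < k' then bcoef a k m (Suc j) * x (n + k - 1 - j) else 0))"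
    by (rule sum.cong) (auto simp: k' algebra_simps less_Suc_eq)
  also have "\<dots> = (\<Sum>j<k. bcoef a k m 0 * a j * x (n + k - 1 - j))
       + (\<Sum>j<k'. bcoef a k m (Suc j) * x (n + k - 1 - j))"
    by (simp add: sum.distrib k')
  finally show ?case using L by simp
qed

lemma exp_sol_of_sol: "is_sol a k x \<Longrightarrow> k \<ge> 1 \<Longrightarrow> is_exp_sol a k m x"
  unfolding is_exp_sol_def using sol_exp[of a k x] by simp

definition pc :: "(nat \<Rightarrow> real) \<Rightarrow> nat \<Rightarrow> complex \<Rightarrow> complex" where
  "pc a k w = w ^ k - (\<Sum>j<k. complex_of_real (a j) * w ^ (k - 1 - j))"

lemma qpoly_Suc: "qpoly a k (Suc m) w = w * qpoly a k m w + complex_of_real (bcoef a k m 0)"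
proof -
  have "w * (\<Sum>i<m. complex_of_real (bcoef a k i 0) * w ^ (m - i - 1))
      = (\<Sum>i<m. complex_of_real (bcoef a k i 0) * w ^ (Suc m - i - 1))"
    unfolding sum_distrib_left
  proof (rule sum.cong)
    fix i assume "i \<in> {..<m}"
    then have "Suc m - i - 1 = Suc (m - i - 1)" by auto
    then show "w * (complex_of_real (bcoef a k i 0) * w ^ (m - i - 1)) =
         complex_of_real (bcoef a k i 0) * w ^ (Suc m - i - 1)" by simp
  qed simp
  then show ?thesis unfolding qpoly_def by (simp add: algebra_simps)
qed

lemma bcoef_0: "bcoef a k m 0 = bcoef a k m 0" ..

lemma E_factor:
  assumes k: "k \<ge> 1"
  shows "w ^ (m + k) - (\<Sum>j<k. complex_of_real (bcoef a k m j) * w ^ (k - 1 - j)) = pc a k w * qpoly a k m w"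
proof (induction m)
  case 0
  then show ?case by (simp add: pc_def qpoly_def)
next
  case (Suc m)
  obtain k' where k': "k = Suc k'" using k by (cases k) auto
  define b where "b j = complex_of_real (bcoef a k m j)" for j
  have "w * (\<Sum>j<k. b j * w ^ (k - 1 - j)) = (\<Sum>j<Suc k'. b j * w ^ (k - j))"
    unfolding sum_distrib_left k'
    by (rule sum.cong) (auto simp: Suc_diff_le)
  also have "\<dots> = b 0 * w ^ k + (\<Sum>j<k'. b (Suc j) * w ^ (k - 1 - j))"
    by (subst sum.lessThan_Suc_shift) (simp add: k')
  finally have A: "w * (\<Sum>j<k. b j * w ^ (k - 1 - j)) = b 0 * w ^ k + (\<Sum>j<k'. b (Suc j) * w ^ (k - 1 - j))" .
  have B: "(\<Sum>j<k. complex_of_real (bcoef a k (Suc m) j) * w ^ (k - 1 - j))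
      = (\<Sum>j<k. b 0 * complex_of_real (a j) * w ^ (k - 1 - j) + (if j < k' then b (Suc j) * w ^ (k - 1 - j) else 0))"
    by (rule sum.cong) (auto simp: k' b_def algebra_simps less_Suc_eq)
  also have "\<dots> = (\<Sum>j<k. b 0 * complex_of_real (a j) * w ^ (k - 1 - j)) + (\<Sum>j<k'. b (Suc j) * w ^ (k - 1 - j))"
    by (simp add: sum.distrib k')
  finally have B: "(\<Sum>j<k. complex_of_real (bcoef a k (Suc m) j) * w ^ (k - 1 - j)) =
      (\<Sum>j<k. b 0 * complex_of_real (a j) * w ^ (k - 1 - j)) + (\<Sum>j<k'. b (Suc j) * w ^ (k - 1 - j))" .
  have "pc a k w * qpoly a k (Suc m) w = w * (pc a k w * qpoly a k m w) + b 0 * pc a k w"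
    by (simp add: qpoly_Suc b_def algebra_simps)
  also have "\<dots> = w * (w ^ (m + k) - (\<Sum>j<k. b j * w ^ (k - 1 - j))) + b 0 * pc a k w"
    using Suc by (simp add: b_def)
  also have "\<dots> = w ^ (Suc m + k) - (\<Sum>j<k. complex_of_real (bcoef a k (Suc m) j) * w ^ (k - 1 - j))"
    unfolding B right_diff_distrib A by (simp add: pc_def sum_distrib_left algebra_simps)
  finally show ?case by simp
qed

lemma roots_p:
  assumes conv: "\<forall>x. is_sol a k x \<longrightarrow> x \<longlonglongrightarrow> 0" and r: "pc a k r = 0"
  shows "cmod r < 1"
proof (rule ccontr)
  assume "\<not> cmod r < 1"
  then have r1: "cmod r \<ge> 1" by simp
  have geo: "r ^ (n + k) = (\<Sum>j<k. complex_of_real (a j) * r ^ (n + k - 1 - j))" for n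
  proof -
    have "r ^ n * pc a k r = 0" using r by simp
    then have "r ^ (n + k) = (\<Sum>j<k. complex_of_real (a j) * (r ^ n * r ^ (k - 1 - j)))"
      by (simp add: pc_def right_diff_distrib sum_distrib_left power_add algebra_simps)
    also have "\<dots> = (\<Sum>j<k. complex_of_real (a j) * r ^ (n + k - 1 - j))"
    proof (rule sum.cong)
      fix j assume "j \<in> {..<k}"
      then have "n + k - 1 - j = n + (k - 1 - j)" by auto
      then show "complex_of_real (a j) * (r ^ n * r ^ (k - 1 - j)) = complex_of_real (a j) * r ^ (n + k - 1 - j)"
        by (simp add: power_add)
    qed simp
    finally show ?thesis .
  qed
  have "is_sol a k (\<lambda>n. Re (r ^ n))" unfolding is_sol_def
  proof
    fix n show "Re (r ^ (n + k)) = (\<Sum>j<k. a j * Re (r ^ (n + k - 1 - j)))"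
      by (subst geo) (simp add: Re_sum)
  qed
  then have re: "(\<lambda>n. Re (r ^ n)) \<longlonglongrightarrow> 0" using conv by blast
  have "is_sol a k (\<lambda>n. Im (r ^ n))" unfolding is_sol_def
  proof
    fix n show "Im (r ^ (n + k)) = (\<Sum>j<k. a j * Im (r ^ (n + k - 1 - j)))"
      by (subst geo) (simp add: Im_sum)
  qed
  then have im: "(\<lambda>n. Im (r ^ n)) \<longlonglongrightarrow> 0" using conv by blast
  have "(\<lambda>n. r ^ n) \<longlonglongrightarrow> 0" using re im by (simp add: tendsto_complex_iff)
  then have "(\<lambda>n. cmod (r ^ n)) \<longlonglongrightarrow> cmod 0" by (rule tendsto_norm)
  then have lim: "(\<lambda>n. cmod r ^ n) \<longlonglongrightarrow> 0" by (simp add: norm_power)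
  have "1 \<le> (0::real)"
    by (rule LIMSEQ_le_const[OF lim]) (use r1 one_le_power in auto)
  then show False by simp
qed

lemma exp_conv:
  assumes k: "k \<ge> 1" and zsol: "is_exp_sol a k m z"
    and rp: "\<And>w. pc a k w = 0 \<Longrightarrow> cmod w < 1"
    and rq: "\<And>w. qpoly a k m w = 0 \<Longrightarrow> cmod w < 1"
  shows "z \<longlonglongrightarrow> 0"
proof -
  define E :: "complex poly" where
    "E = monom 1 (m + k) - (\<Sum>j<k. monom (complex_of_real (bcoef a k m j)) (k - 1 - j))"
  define u where "u n = complex_of_real (z n)" for n
  have degE: "degree E \<le> m + k" unfolding E_def
    by (intro degree_diff_le degree_sum_le) (auto intro: order.trans[OF degree_monom_le])
  have cE: "coeff E (m + k) = 1" unfolding E_def using k by (auto simp: coeff_sum intro!: sum.neutral)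
  then have E0: "E \<noteq> 0" by auto
  have polyE: "poly E w = pc a k w * qpoly a k m w" for w
    using E_factor[OF k, of w m a] by (simp add: E_def poly_sum poly_monom)
  have roots: "\<forall>w. poly E w = 0 \<longrightarrow> cmod w < 1" using rp rq polyE by auto
  have op0: "opQ E u n = 0" for n
  proof -
    have "opQ E u n = (\<Sum>i\<le>m+k. coeff E i * u (n + i))" by (rule opQ_big[OF degE])
    also have "\<dots> = (\<Sum>i\<le>m+k. (if i = m + k then u (n + i) else 0))
         - (\<Sum>i\<le>m+k. \<Sum>j<k. (if i = k - 1 - j then complex_of_real (bcoef a k m j) * u (n + i) else 0))"
    proof -
      have cE': "coeff E i = (if i = m + k then 1 else 0)
          - (\<Sum>j<k. if i = k - 1 - j then complex_of_real (bcoef a k m j) else 0)" for i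
        unfolding E_def coeff_diff coeff_sum coeff_monom by (auto intro!: sum.cong)
      show ?thesis unfolding cE' left_diff_distrib sum_subtractf sum_distrib_right
        by (intro arg_cong2[where f=minus] sum.cong refl) auto
    qed
    also have "(\<Sum>i\<le>m+k. \<Sum>j<k. (if i = k - 1 - j then complex_of_real (bcoef a k m j) * u (n + i) else 0))
       = (\<Sum>j<k. \<Sum>i\<le>m+k. (if i = k - 1 - j then complex_of_real (bcoef a k m j) * u (n + i) else 0))"
      by (rule sum.swap)
    also have "\<dots> = (\<Sum>j<k. complex_of_real (bcoef a k m j) * u (n + (k - 1 - j)))"
      by (rule sum.cong) (auto simp: sum.delta)
    finally have "opQ E u n = u (n + m + k) - (\<Sum>j<k. complex_of_real (bcoef a k m j) * u (n + (k - 1 - j)))"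
      by (simp add: add.assoc)
    also have "\<dots> = complex_of_real (z (n + m + k) - (\<Sum>j<k. bcoef a k m j * z (n + m + k - 1 - m - j)))"
    proof -
      have "(\<Sum>j<k. complex_of_real (bcoef a k m j) * u (n + (k - 1 - j)))
          = complex_of_real (\<Sum>j<k. bcoef a k m j * z (n + m + k - 1 - m - j))"
        unfolding of_real_sum
      proof (rule sum.cong)
        fix j assume "j \<in> {..<k}"
        then have "n + (k - 1 - j) = n + m + k - 1 - m - j" by auto
        then show "complex_of_real (bcoef a k m j) * u (n + (k - 1 - j)) =
              complex_of_real (bcoef a k m j * z (n + m + k - 1 - m - j))" by (simp add: u_def)
      qed simp
      then show ?thesis by (simp add: u_def)
    qed
    also have "\<dots> = 0" using zsol unfolding is_exp_sol_def by simp
    finally show ?thesis .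
  qed
  have "u \<longlonglongrightarrow> 0"
    by (rule stable_poly[OF refl E0 roots]) (simp add: op0)
  then have "(\<lambda>n. Re (u n)) \<longlonglongrightarrow> Re 0" by (rule tendsto_Re)
  then show ?thesis unfolding u_def by simp
qed

theorem mainTheorem6:
  fixes a :: "nat \<Rightarrow> real" and k :: nat
  assumes "k \<ge> 2" and "a 0 \<noteq> 0"
  shows "((\<exists>m. \<forall>z. is_exp_sol a k m z \<longrightarrow> z \<longlonglongrightarrow> 0)
            \<longrightarrow> (\<forall>x. is_sol a k x \<longrightarrow> x \<longlonglongrightarrow> 0))
       \<and> (\<forall>m. (\<forall>x. is_sol a k x \<longrightarrow> x \<longlonglongrightarrow> 0)
            \<and> (\<forall>w. qpoly a k m w = 0 \<longrightarrow> cmod w < 1)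
            \<longrightarrow> (\<forall>z. is_exp_sol a k m z \<longrightarrow> z \<longlonglongrightarrow> 0))"
proof -
  have k: "k \<ge> 1" using assms(1) by simp
  show ?thesis
  proof (intro conjI impI allI)
    fix x assume "\<exists>m. \<forall>z. is_exp_sol a k m z \<longrightarrow> z \<longlonglongrightarrow> 0" "is_sol a k x"
    then show "x \<longlonglongrightarrow> 0" using exp_sol_of_sol[OF _ k] by blast
  next
    fix m z
    assume h: "(\<forall>x. is_sol a k x \<longrightarrow> x \<longlonglongrightarrow> 0) \<and> (\<forall>w. qpoly a k m w = 0 \<longrightarrow> cmod w < 1)"
      and z: "is_exp_sol a k m z"
    show "z \<longlonglongrightarrow> 0"
      by (rule exp_conv[OF k z]) (use h roots_p in auto)
  qed
qed

end
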